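(* For every positive integer $n$, $$\#\mathcal{G}_{2n}(3n+1)=\#\mathcal{G}_{2n+1}(3n+2).$$
   Context: A gapset is a finite set $G\subset\mathbb{N}=\{1,2,\dots\}$ such that whenever $z\in G$ and $z=x+y$ with $x,y\in\mathbb{N}$, then $x\in G$ or $y\in G$. Its genus is $\#G$. Writing $G=\{\ell_1<\dots<\ell_g\}$, $G$ is called pure $\kappa$-sparse if $\ell_{i+1}-\ell_i\le\kappa$ for all $i\in[1,g-1]$ and $\ell_{i+1}-\ell_i=\kappa$ for at least one $i$. $\mathcal{G}_\kappa(g)$ denotes the set of pure $\kappa$-sparse gapsets of genus $g$. *)

theory Defs
  imports Main
begin

definition gapset :: "nat set \<Rightarrow> bool" where
  "gapset G \<longleftrightarrow> finite G \<and> 0 \<notin> G \<and>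
     (\<forall>z\<in>G. \<forall>x y. x \<ge> 1 \<and> y \<ge> 1 \<and> z = x + y \<longrightarrow> x \<in> G \<or> y \<in> G)"

definition pure_sparse :: "nat \<Rightarrow> nat set \<Rightarrow> bool" where
  "pure_sparse \<kappa> G \<longleftrightarrow>
     (let l = sorted_list_of_set G in
       (\<forall>i. i + 1 < length l \<longrightarrow> l ! (i + 1) - l ! i \<le> \<kappa>) \<and>
       (\<exists>i. i + 1 < length l \<and> l ! (i + 1) - l ! i = \<kappa>))"

definition pure_sparse_gapsets :: "nat \<Rightarrow> nat \<Rightarrow> nat set set" where
  "pure_sparse_gapsets \<kappa> g = {G. gapset G \<and> card G = g \<and> pure_sparse \<kappa> G}"

end

theory Submission
  imports Defs
begin


definition sp :: "nat \<Rightarrow> nat set \<Rightarrow> bool" where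
  "sp k G \<longleftrightarrow> (\<forall>x\<in>G. (\<exists>y\<in>G. x < y) \<longrightarrow> (\<exists>y\<in>G. x < y \<and> y \<le> x + k))"

definition isjump :: "nat \<Rightarrow> nat set \<Rightarrow> nat \<Rightarrow> bool" where
  "isjump k G x \<longleftrightarrow> x \<in> G \<and> x + k \<in> G \<and> (\<forall>z. x < z \<and> z < x + k \<longrightarrow> z \<notin> G)"

lemma ss_less_iff:
  assumes "sorted_wrt (<) (l::nat list)" "i < length l" "j < length l"
  shows "l!i < l!j \<longleftrightarrow> i < j"
  using assms sorted_wrt_nth_less 
  by (metis linorder_neqE_nat order_less_asym order_less_irrefl)

lemma pure_sparse_iff:
  assumes fin: "finite G" and k: "k \<ge> 1"
  shows "pure_sparse k G \<longleftrightarrow> sp k G \<and> (\<exists>x. isjump k G x)"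
proof -
  define l where "l = sorted_list_of_set G"
  have ss: "sorted_wrt (<) l" using l_def by (simp add: strict_sorted_list_of_set)
  have sl: "set l = G" using l_def fin by simp
  have lt: "\<And>i j. i < length l \<Longrightarrow> j < length l \<Longrightarrow> l!i < l!j \<longleftrightarrow> i < j"
    using ss_less_iff[OF ss] by blast
  have memG: "\<And>x. x \<in> G \<longleftrightarrow> (\<exists>i<length l. l!i = x)" using sl by (auto simp: in_set_conv_nth)
  have nthG: "\<And>i. i < length l \<Longrightarrow> l!i \<in> G" using sl nth_mem by blast
  have A: "(\<forall>i. i + 1 < length l \<longrightarrow> l ! (i + 1) - l ! i \<le> k) \<longleftrightarrow> sp k G"
  proof
    assume H: "\<forall>i. i + 1 < length l \<longrightarrow> l ! (i + 1) - l ! i \<le> k"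
    show "sp k G" unfolding sp_def
    proof (intro ballI impI)
      fix x assume "x \<in> G" "\<exists>y\<in>G. x < y"
      then obtain i j where ij: "i < length l" "l!i = x" "j < length l" "x < l!j" using memG by metis
      then have "i < j" using lt by blast
      then have i1: "i+1 < length l" using ij by simp
      have "l!i < l!(i+1)" using lt i1 by simp
      moreover have "l!(i+1) \<in> G" using i1 nthG by blast
      moreover have "l!(i+1) - l!i \<le> k" using H i1 by blast
      ultimately show "\<exists>y\<in>G. x < y \<and> y \<le> x + k" using ij by (intro bexI[of _ "l!(i+1)"]) auto
    qed
  next
    assume H: "sp k G"
    show "\<forall>i. i + 1 < length l \<longrightarrow> l ! (i + 1) - l ! i \<le> k"
    proof (intro allI impI)
      fix i assume i1: "i + 1 < length l"
      have xi: "l!i \<in> G" "l!(i+1) \<in> G" using i1 nthG by auto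
      have "l!i < l!(i+1)" using lt i1 by simp
      then obtain y where y: "y \<in> G" "l!i < y" "y \<le> l!i + k" using H xi unfolding sp_def by blast
      then obtain j where j: "j < length l" "l!j = y" using memG by blast
      then have "i < j" using lt y i1 by auto
      then have "i + 1 = j \<or> i + 1 < j" by auto
      then have "l!(i+1) \<le> l!j" using lt[of "i+1" j] j i1 by auto
      then show "l ! (i + 1) - l ! i \<le> k" using j y by simp
    qed
  qed
  have B: "(\<exists>i. i + 1 < length l \<and> l ! (i + 1) - l ! i = k) \<longleftrightarrow> (\<exists>x. isjump k G x)"
  proof
    assume "\<exists>i. i + 1 < length l \<and> l ! (i + 1) - l ! i = k"
    then obtain i where i1: "i + 1 < length l" "l ! (i + 1) - l ! i = k" by blast
    have lt1: "l!i < l!(i+1)" using lt i1 by simp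
    have "isjump k G (l!i)" unfolding isjump_def
    proof (intro conjI allI impI)
      show "l!i \<in> G" using i1 nthG by auto
      have e: "l!(i+1) = l!i + k" using i1(2) lt1 by simp
      show "l!i + k \<in> G" using i1 nthG e by metis
      fix z assume z: "l ! i < z \<and> z < l ! i + k"
      show "z \<notin> G"
      proof
        assume "z \<in> G"
        then obtain j where j: "j < length l" "l!j = z" using memG by blast
        have "i < j" using lt j z i1 by auto
        have e: "l!(i+1) = l!i + k" using i1(2) lt1 by simp
        have "l!j < l!(i+1)" using e j z by simp
        moreover have "j < i + 1" using lt[of j "i+1"] j i1 calculation by blast
        ultimately show False using \<open>i < j\<close> by simp
      qed
    qed
    then show "\<exists>x. isjump k G x" by blast
  next
    assume "\<exists>x. isjump k G x"
    then obtain x where x: "isjump k G x" by blast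
    then obtain i j where ij: "i < length l" "l!i = x" "j < length l" "l!j = x + k"
      using memG unfolding isjump_def by metis
    have "l!i < l!j" using ij k by simp
    then have "i < j" using lt ij by blast
    have "j = i + 1"
    proof (rule ccontr)
      assume "j \<noteq> i + 1"
      then have "i + 1 < j" using \<open>i<j\<close> by simp
      then have "l!i < l!(i+1)" "l!(i+1) < l!j" using lt[of i "i+1"] lt[of "i+1" j] ij by auto
      moreover have "l!(i+1) \<in> G" using nthG \<open>i+1<j\<close> ij by auto
      ultimately show False using x ij unfolding isjump_def by auto
    qed
    then show "\<exists>i. i + 1 < length l \<and> l ! (i + 1) - l ! i = k" using ij by auto
  qed
  show ?thesis unfolding pure_sparse_def Let_def l_def[symmetric] using A B by blast
qed



definition mult :: "nat set \<Rightarrow> nat" where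
  "mult G = (LEAST x. 1 \<le> x \<and> x \<notin> G)"

definition lj :: "nat \<Rightarrow> nat set \<Rightarrow> nat" where
  "lj k G = Max {x. isjump k G x}"

lemma gap_diff:
  assumes "gapset G" "z \<in> G" "1 \<le> x" "x < z" "x \<notin> G"
  shows "z - x \<in> G"
proof -
  have "\<forall>a b. a \<ge> 1 \<and> b \<ge> 1 \<and> z = a + b \<longrightarrow> a \<in> G \<or> b \<in> G"
    using assms(1,2) unfolding gapset_def by blast
  then have "x \<in> G \<or> z - x \<in> G" using assms(3,4) by (auto elim!: allE[of _ x] allE[of _ "z-x"])
  then show ?thesis using assms(5) by blast
qed

lemma gap_sum:
  assumes "gapset G" "1 \<le> a" "1 \<le> b" "a \<notin> G" "b \<notin> G"
  shows "a + b \<notin> G"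
  using assms unfolding gapset_def by blast

lemma mult_props:
  assumes "finite G"
  shows "1 \<le> mult G" "mult G \<notin> G" "\<And>x. 1 \<le> x \<Longrightarrow> x < mult G \<Longrightarrow> x \<in> G"
proof -
  have "finite (insert 0 G)" using assms by simp
  then obtain y where y: "y \<notin> insert 0 G" using ex_new_if_finite[OF infinite_UNIV_nat] by blast
  then have ex: "1 \<le> y \<and> y \<notin> G" by auto
  show "1 \<le> mult G" "mult G \<notin> G" using LeastI[of "\<lambda>x. 1 \<le> x \<and> x \<notin> G", OF ex] unfolding mult_def by auto
  fix x assume "1 \<le> x" "x < mult G"
  then show "x \<in> G" using not_less_Least[of x "\<lambda>x. 1 \<le> x \<and> x \<notin> G"] unfolding mult_def by blast
qed

lemma mult_eqI:
  assumes "1 \<le> m" "m \<notin> G" "\<And>x. 1 \<le> x \<Longrightarrow> x < m \<Longrightarrow> x \<in> G"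
  shows "mult G = m"
  unfolding mult_def
  by (rule Least_equality) (use assms in \<open>auto simp: not_less[symmetric]\<close>)

lemma lj_eqI:
  assumes "finite G" "isjump k G l" "\<And>x. isjump k G x \<Longrightarrow> x \<le> l"
  shows "lj k G = l"
proof -
  have "{x. isjump k G x} \<subseteq> G" unfolding isjump_def by auto
  then have "finite {x. isjump k G x}" using assms(1) finite_subset by blast
  then show ?thesis unfolding lj_def using assms by (intro Max_eqI) auto
qed

lemma succ_ex:
  fixes G :: "nat set"
  assumes "finite G" "x \<in> G" "y \<in> G" "x < y"
  shows "\<exists>s\<in>G. x < s \<and> (\<forall>z\<in>G. x < z \<longrightarrow> s \<le> z)"
proof -
  let ?S = "{z\<in>G. x < z}"
  have "finite ?S" "?S \<noteq> {}" using assms by auto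
  then show ?thesis by (intro bexI[of _ "Min ?S"]) (auto intro: Min_le dest: Min_in)
qed

definition FF :: "nat \<Rightarrow> nat \<Rightarrow> nat \<Rightarrow> nat" where
  "FF m l x = (if x < m then x else if x \<le> l then x + 1 else x + 2)"

lemma FF_mono: "m \<le> l + 1 \<Longrightarrow> x < y \<Longrightarrow> FF m l x < FF m l y"
  unfolding FF_def by auto

lemma FF_inj: "m \<le> l + 1 \<Longrightarrow> FF m l x = FF m l y \<Longrightarrow> x = y"
  using FF_mono[of m l x y] FF_mono[of m l y x] by (cases x y rule: linorder_cases) auto

lemma FF_bounds: "x \<le> FF m l x" "FF m l x \<le> x + 2" unfolding FF_def by auto

locale sgap =
  fixes G :: "nat set" and k :: nat
  assumes gs: "gapset G" and spk: "sp k G" and hasj: "\<exists>x. isjump k G x" and k2: "k \<ge> 2"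
begin

definition "m = mult G"
definition "l = lj k G"

lemma fin: "finite G" using gs unfolding gapset_def by blast

lemma m1: "1 \<le> m" and mG: "m \<notin> G" and belowm: "\<And>x. 1 \<le> x \<Longrightarrow> x < m \<Longrightarrow> x \<in> G"
  using mult_props[OF fin] unfolding m_def by auto

lemma G0: "0 \<notin> G" using gs unfolding gapset_def by blast

lemma ljprops: "isjump k G l" "\<And>x. isjump k G x \<Longrightarrow> x \<le> l"
proof -
  have "{x. isjump k G x} \<subseteq> G" unfolding isjump_def by auto
  then have f: "finite {x. isjump k G x}" using fin finite_subset by blast
  show "isjump k G l" using hasj Max_in[OF f] unfolding l_def lj_def by auto
  fix x assume "isjump k G x" then show "x \<le> l" using Max_ge[OF f] unfolding l_def lj_def by auto
qed

lemma lG: "l \<in> G" and lkG: "l + k \<in> G" and J: "\<And>z. l < z \<Longrightarrow> z < l + k \<Longrightarrow> z \<notin> G"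
  using ljprops(1) unfolding isjump_def by auto

lemma l1: "1 \<le> l" using lG G0 by (cases l) auto

lemma m_ge_k: "k \<le> m"
proof (rule ccontr)
  assume "\<not> k \<le> m"
  then have "l < l + k - m" "l + k - m < l + k" using m1 by auto
  then have "l + k - m \<notin> G" using J by blast
  moreover have "1 \<le> l + k - m" using \<open>l < l + k - m\<close> by simp
  ultimately have "(l + k - m) + m \<notin> G" using gap_sum[OF gs _ m1 _ mG] by blast
  then show False using lkG \<open>\<not> k \<le> m\<close> by simp
qed

lemma l_ge: "m \<le> l + 1"
proof (rule ccontr)
  assume "\<not> m \<le> l + 1"
  then have "l + 1 \<in> G" using belowm by simp
  then show False using J[of "l+1"] k2 by simp
qed

lemma Ubound: "u \<in> G \<Longrightarrow> l + k \<le> u \<Longrightarrow> u \<le> l + m"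
proof (induction u rule: less_induct)
  case (less u)
  show ?case
  proof (rule ccontr)
    assume nu: "\<not> u \<le> l + m"
    then have "l + k < u" using m_ge_k by simp
    let ?P = "{x\<in>G. x < u}"
    have fP: "finite ?P" "?P \<noteq> {}" using fin lkG \<open>l + k < u\<close> by auto
    define p where "p = Max ?P"
    have pG: "p \<in> G" "p < u" using Max_in[OF fP] p_def by auto
    have pge: "l + k \<le> p" using Max_ge[OF fP(1), of "l+k"] lkG \<open>l+k<u\<close> p_def by auto
    have nb: "\<And>z. z \<in> G \<Longrightarrow> p < z \<Longrightarrow> u \<le> z"
    proof (rule ccontr)
      fix z assume z: "z \<in> G" "p < z" "\<not> u \<le> z"
      then have "z \<le> p" using Max_ge[OF fP(1), of z] p_def by simp
      then show False using z by simp
    qed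
    obtain y where y: "y \<in> G" "p < y" "y \<le> p + k" using spk pG less.prems(1) unfolding sp_def by blast
    have "u \<le> y" using nb y by blast
    then have upk: "u \<le> p + k" using y by simp
    have "u \<noteq> p + k"
    proof
      assume "u = p + k"
      then have "isjump k G p" unfolding isjump_def using pG less.prems(1) nb by fastforce
      then have "p \<le> l" using ljprops by blast
      then show False using pge k2 by simp
    qed
    then have "u < p + k" using upk by simp
    have "p \<le> l + m" using less.IH[OF pG(2) pG(1) pge] .
    define j where "j = u - m"
    have "l < j" "j < l + k" using nu \<open>u < p + k\<close> \<open>p \<le> l + m\<close> m_ge_k unfolding j_def by auto
    then have "j \<notin> G" using J by blast
    have "j + m \<notin> G" using gap_sum[OF gs _ m1 \<open>j \<notin> G\<close> mG] \<open>l < j\<close> by simp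
    then show False using less.prems(1) nu unfolding j_def by simp
  qed
qed

lemma twoel_card:
  assumes "x \<in> G" "y \<in> G" "m < x" "x < y"
  shows "m + 1 \<le> card G"
proof -
  have "{1..<m} \<union> {x, y} \<subseteq> G" using assms belowm by auto
  then have "card ({1..<m} \<union> {x, y}) \<le> card G" using fin card_mono by blast
  moreover have "card ({1..<m} \<union> {x, y}) = m - 1 + 2" using assms
    by (subst card_Un_disjoint) auto
  ultimately show ?thesis using m1 by simp
qed

end


definition Phi :: "nat \<Rightarrow> nat set \<Rightarrow> nat set" where
  "Phi k G = insert (mult G) (FF (mult G) (lj k G) ` G)"

definition Psi :: "nat \<Rightarrow> nat set \<Rightarrow> nat set" where
  "Psi k G = {x. x \<noteq> mult G - 1 \<and> FF (mult G - 1) (lj k G - 1) x \<in> G}"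

locale sgapA = sgap +
  assumes lt2m: "l < 2 * m"
  and TA: "\<And>x y. x \<in> G \<Longrightarrow> y \<in> G \<Longrightarrow> m < x \<Longrightarrow> x < y \<Longrightarrow> m \<le> 2 * k"
begin

abbreviation "f \<equiv> FF m l"
abbreviation "P \<equiv> Phi k G"

lemma P_eq: "P = insert m (f ` G)" unfolding Phi_def m_def l_def by simp

lemma f_mono: "x < y \<Longrightarrow> f x < f y" using FF_mono l_ge by blast
lemma f_inj: "f x = f y \<Longrightarrow> x = y" using FF_inj l_ge by blast
lemma f_rev: "f x < f y \<Longrightarrow> x < y"
proof (rule ccontr)
  assume a: "f x < f y" "\<not> x < y"
  then have "y < x \<or> y = x" by auto
  then show False using f_mono[of y x] a by auto
qed
lemma f_ne_m: "f x \<noteq> m" using l_ge unfolding FF_def by auto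

lemma f_low: "x < m \<Longrightarrow> f x = x" unfolding FF_def by simp
lemma f_mid: "m \<le> x \<Longrightarrow> x \<le> l \<Longrightarrow> f x = x + 1" unfolding FF_def by simp
lemma f_high: "l < x \<Longrightarrow> f x = x + 2" using l_ge unfolding FF_def by auto

lemma imgI: "f x = y \<Longrightarrow> x \<in> G \<Longrightarrow> y \<in> P"
  unfolding P_eq by blast

lemma upto_m: "1 \<le> x \<Longrightarrow> x \<le> m \<Longrightarrow> x \<in> P"
  using belowm f_low unfolding P_eq by (cases "x = m") (auto intro!: image_eqI[of x f x])

lemma high_ge: "w \<in> G \<Longrightarrow> l < w \<Longrightarrow> l + k \<le> w"
  using J by (meson not_le)

lemma P_fin: "finite P" using fin unfolding P_eq by simp

lemma P_card: "card P = card G + 1"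
proof -
  have "inj_on f G" using f_inj by (meson inj_onI)
  moreover have "m \<notin> f ` G"
  proof
    assume "m \<in> f ` G" then obtain x where "m = f x" by auto
    then show False using f_ne_m[of x] by simp
  qed
  ultimately show ?thesis unfolding P_eq using fin by (simp add: card_image)
qed

lemma P_gap: "gapset P"
  unfolding gapset_def
proof (intro conjI ballI allI impI)
  show "finite P" by (rule P_fin)
  show "0 \<notin> P" unfolding P_eq using m1 G0 f_low f_mid f_high l_ge
    by (auto simp: FF_def split: if_splits)
  fix z a b assume z: "z \<in> P" and ab: "1 \<le> a \<and> 1 \<le> b \<and> z = a + b"
  show "a \<in> P \<or> b \<in> P"
  proof (rule ccontr)
    assume nab: "\<not> (a \<in> P \<or> b \<in> P)"
    have "\<not> a \<le> m" "\<not> b \<le> m" using upto_m ab nab by blast+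
    then have am: "m + 1 \<le> a" "m + 1 \<le> b" by simp_all
    from z consider "z = m" | w where "w \<in> G" "z = f w" unfolding P_eq by blast
    then show False
    proof cases
      case 1 then show ?thesis using am ab by simp
    next
      case 2
      have "w \<noteq> m" using 2 mG by blast
      show ?thesis
      proof (cases "w \<le> l")
        case True
        then have "z \<le> l + 1" using 2 f_low f_mid \<open>w\<noteq>m\<close> by (cases "w < m") auto
        then show ?thesis using am ab lt2m by simp
      next
        case False
        then have zw: "z = w + 2" using 2 f_high by simp
        have w1: "l + k \<le> w" "w \<le> l + m" using high_ge Ubound 2 False by auto
        have nG: "x - 1 \<notin> G" if x: "x \<notin> P" "m + 1 \<le> x" "x \<le> l + k" for x
        proof
          assume xG: "x - 1 \<in> G"
          have "x - 1 \<noteq> m" using xG mG by auto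
          show False
          proof (cases "x - 1 \<le> l")
            case True
            then have "f (x - 1) = x" using f_mid \<open>x - 1 \<noteq> m\<close> x by simp
            then show False using x xG imgI by blast
          next
            case False
            then show False using J[of "x - 1"] xG x by simp
          qed
        qed
        have al: "a \<le> l + k" "b \<le> l + k"
        proof -
          show "a \<le> l + k"
          proof (rule ccontr)
            assume "\<not> a \<le> l + k"
            then show False using ab zw w1 am m_ge_k k2 by linarith
          qed
          show "b \<le> l + k"
          proof (rule ccontr)
            assume "\<not> b \<le> l + k"
            then show False using ab zw w1 am m_ge_k k2 by linarith
          qed
        qed
        have "a - 1 \<notin> G" "b - 1 \<notin> G" using nG nab am al by auto
        moreover have "1 \<le> a - 1" "1 \<le> b - 1" using am m1 by auto
        ultimately have "(a - 1) + (b - 1) \<notin> G" using gap_sum[OF gs] by blast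
        moreover have "(a - 1) + (b - 1) = w" using ab zw am by simp
        ultimately show False using 2 by simp
      qed
    qed
  qed
qed

lemma P_mult: "mult P = m + 1"
proof (rule mult_eqI)
  show "1 \<le> m + 1" by simp
  show "m + 1 \<notin> P"
  proof
    assume "m + 1 \<in> P"
    then obtain w where w: "w \<in> G" "f w = m + 1" unfolding P_eq by auto
    show False
    proof (cases "w < m")
      case True then show ?thesis using w f_low by simp
    next
      case False
      then show ?thesis using w f_mid f_high mG l_ge by (cases "w \<le> l") auto
    qed
  qed
  fix x assume "1 \<le> x" "x < m + 1" then show "x \<in> P" using upto_m by simp
qed

lemma lP: "l + 1 \<in> P"
proof (cases "m \<le> l")
  case True then show ?thesis using f_mid lG unfolding P_eq by (auto intro!: image_eqI[of _ f l])
next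
  case False then have "l + 1 = m" using l_ge by simp
  then show ?thesis unfolding P_eq by simp
qed

lemma P_jump: "isjump (k + 1) P (l + 1)"
  unfolding isjump_def
proof (intro conjI allI impI)
  show "l + 1 \<in> P" by (rule lP)
  have "f (l + k) = l + 1 + (k + 1)" using f_high k2 by simp
  then have "l + 1 + (k + 1) \<in> f ` G" using lkG by (intro image_eqI[of _ f "l+k"]) auto
  then show "l + 1 + (k + 1) \<in> P" unfolding P_eq by blast
  fix z assume z: "l + 1 < z \<and> z < l + 1 + (k + 1)"
  show "z \<notin> P"
  proof
    assume "z \<in> P"
    then consider "z = m" | w where "w \<in> G" "z = f w" unfolding P_eq by blast
    then show False
    proof cases
      case 1 then show ?thesis using z l_ge by simp
    next
      case 2
      show ?thesis
      proof (cases "w \<le> l")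
        case True
        then have "f w \<le> l + 1" unfolding FF_def by auto
        then show ?thesis using 2 z by simp
      next
        case False
        then have "f w = w + 2" "l + k \<le> w" using f_high high_ge 2 by auto
        then show ?thesis using 2 z by simp
      qed
    qed
  qed
qed

lemma P_lj: "lj (k + 1) P = l + 1"
proof (rule lj_eqI[OF P_fin P_jump])
  fix x assume xj: "isjump (k + 1) P x"
  show "x \<le> l + 1"
  proof (rule ccontr)
    assume nx: "\<not> x \<le> l + 1"
    have xP: "x \<in> P" "x + (k + 1) \<in> P" using xj unfolding isjump_def by auto
    obtain w where w: "w \<in> G" "x = f w" using xP(1) nx l_ge unfolding P_eq by auto
    have wl: "l < w" using w nx unfolding FF_def by (auto split: if_splits)
    obtain v where v: "v \<in> G" "x + (k + 1) = f v" using xP(2) nx l_ge unfolding P_eq by auto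
    have "f w < f v" using w v by simp
    then have "w < v" by (rule f_rev)
    then have vl: "l < v" using wl by simp
    have e: "v = w + k + 1" using v w f_high wl vl by simp
    have "l + k \<le> w" using high_ge w wl by simp
    moreover have "v \<le> l + m" using Ubound v vl high_ge by simp
    moreover have "m < w" using \<open>l + k \<le> w\<close> l_ge k2 by simp
    ultimately show False using TA[OF w(1) v(1) \<open>m < w\<close> \<open>w < v\<close>] e by simp
  qed
qed

lemma P_sp: "sp (k + 1) P"
  unfolding sp_def
proof (intro ballI impI)
  fix x assume xP: "x \<in> P" and ex: "\<exists>y\<in>P. x < y"
  show "\<exists>y\<in>P. x < y \<and> y \<le> x + (k + 1)"
  proof (cases "x = m")
    case True
    have m1G: "m - 1 \<in> G" using belowm m_ge_k k2 by simp
    have "m - 1 < l + k" using l_ge k2 by simp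
    then obtain y where y: "y \<in> G" "m - 1 < y" "y \<le> m - 1 + k" using spk m1G lkG unfolding sp_def by blast
    have "y \<noteq> m" using y mG by blast
    have "f y \<in> P" using y unfolding P_eq by simp
    moreover have "m < f y" using y \<open>y \<noteq> m\<close> FF_bounds(1)[where x=y and m=m and l=l] by simp
    moreover have "f y \<le> m + (k + 1)" using FF_bounds(2)[where x=y and m=m and l=l] y m1 by simp
    ultimately show ?thesis using True by blast
  next
    case False
    then obtain w where w: "w \<in> G" "x = f w" using xP unfolding P_eq by blast
    show ?thesis
    proof (cases "w + 1 < m")
      case True
      then have "w + 1 \<in> G" using belowm by simp
      then have "f (w + 1) \<in> P" unfolding P_eq by simp
      then show ?thesis using True w f_low by (intro bexI[of _ "f (w+1)"]) auto
    next
      case False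
      show ?thesis
      proof (cases "w + 1 = m")
        case True
        then show ?thesis using w f_low[of w] upto_m[of m] m1 by (intro bexI[of _ m]) auto
      next
        case False
        have "w \<noteq> m" using w mG by blast
        then have wm: "m < w" using \<open>\<not> w + 1 < m\<close> False by linarith
        obtain y' where y': "y' \<in> P" "x < y'" using ex by blast
        have "w \<le> x" using w FF_bounds(1)[where x=w and m=m and l=l] by simp
        then have "y' \<noteq> m" using y' wm by simp
        then obtain v where v: "v \<in> G" "y' = f v" using y' unfolding P_eq by blast
        have "w < v" using v y' w f_rev by simp
        then obtain y where y: "y \<in> G" "w < y" "y \<le> w + k" using spk w v unfolding sp_def by blast
        have "f w < f y" using f_mono y by simp
        moreover have "w + 1 \<le> f w" using wm unfolding FF_def by auto
        moreover have "f y \<le> y + 2" by (rule FF_bounds(2))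
        moreover have "f y \<in> P" using y unfolding P_eq by simp
        ultimately show ?thesis using w y by (intro bexI[of _ "f y"]) auto
      qed
    qed
  qed
qed

lemma P_Psi: "Psi (k + 1) P = G"
proof -
  have e: "Psi (k + 1) P = {x. x \<noteq> m \<and> f x \<in> P}" unfolding Psi_def P_mult P_lj by simp
  show ?thesis unfolding e
  proof (intro set_eqI iffI)
    fix x assume "x \<in> {x. x \<noteq> m \<and> f x \<in> P}"
    then have "f x \<in> f ` G" using f_ne_m unfolding P_eq by auto
    then show "x \<in> G" using f_inj by auto
  next
    fix x assume "x \<in> G" then show "x \<in> {x. x \<noteq> m \<and> f x \<in> P}" using mG unfolding P_eq by auto
  qed
qed

end


context sgap begin

lemma jump_ge: "isjump k G a \<Longrightarrow> m \<le> a + 1"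
proof (rule ccontr)
  assume a: "isjump k G a" "\<not> m \<le> a + 1"
  then have "a + 1 \<in> G" using belowm by simp
  then show False using a k2 unfolding isjump_def by auto
qed

lemma high_ge': "w \<in> G \<Longrightarrow> l < w \<Longrightarrow> l + k \<le> w"
  using J by (meson not_le)

end

locale sgapB = sgap +
  assumes k3: "k \<ge> 3" and le2m: "l + 2 \<le> 2 * m"
  and TB: "\<And>x y. x \<in> G \<Longrightarrow> y \<in> G \<Longrightarrow> m < x \<Longrightarrow> x < y \<Longrightarrow> m + 1 < 2 * k"
begin

abbreviation "g \<equiv> FF (m - 1) (l - 1)"
abbreviation "Q \<equiv> Psi k G"

lemma m3: "3 \<le> m" using m_ge_k k3 by simp

lemma Q_eq: "Q = {x. x \<noteq> m - 1 \<and> g x \<in> G}" unfolding Psi_def m_def l_def by simp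

lemma gmono_ok: "m - 1 \<le> l - 1 + 1" using l_ge l1 by simp
lemma g_mono: "x < y \<Longrightarrow> g x < g y" using FF_mono[OF gmono_ok] by blast
lemma g_inj: "g x = g y \<Longrightarrow> x = y" using FF_inj[OF gmono_ok] by blast
lemma g_rev: "g x < g y \<Longrightarrow> x < y"
proof (rule ccontr)
  assume a: "g x < g y" "\<not> x < y"
  then have "y < x \<or> y = x" by auto
  then show False using g_mono[of y x] a by auto
qed
lemma g_low: "x < m - 1 \<Longrightarrow> g x = x" unfolding FF_def by simp
lemma g_mid: "m - 1 \<le> x \<Longrightarrow> x \<le> l - 1 \<Longrightarrow> g x = x + 1" unfolding FF_def by simp
lemma g_high: "l - 1 < x \<Longrightarrow> g x = x + 2" using l_ge l1 unfolding FF_def by auto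

lemma g_m1: "g (m - 1) \<notin> G"
proof (cases "m \<le> l")
  case True
  then have "g (m - 1) = m" using g_mid m1 by simp
  then show ?thesis using mG by simp
next
  case False
  then have "l = m - 1" using l_ge by simp
  then have "g (m - 1) = l + 2" using g_high m3 by simp
  then show ?thesis using J[of "l+2"] k3 by simp
qed

lemma QI: "x \<noteq> m - 1 \<Longrightarrow> g x \<in> G \<Longrightarrow> x \<in> Q" unfolding Q_eq by simp
lemma QD: "x \<in> Q \<Longrightarrow> x \<noteq> m - 1 \<and> g x \<in> G" unfolding Q_eq by simp

lemma pre_mid: "y \<in> G \<Longrightarrow> m < y \<Longrightarrow> y \<le> l \<Longrightarrow> g (y - 1) = y \<and> y - 1 \<in> Q"
proof -
  assume y: "y \<in> G" "m < y" "y \<le> l"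
  have "m - 1 \<le> y - 1" "y - 1 \<le> l - 1" using y by auto
  then have e: "g (y - 1) = y" using g_mid[of "y - 1"] y by simp
  have "y - 1 \<noteq> m - 1" using y m1 by simp
  then show ?thesis using e QI[of "y-1"] y by simp
qed

lemma pre_high: "y \<in> G \<Longrightarrow> l < y \<Longrightarrow> g (y - 2) = y \<and> y - 2 \<in> Q"
proof -
  assume y: "y \<in> G" "l < y"
  then have "l + k \<le> y" using high_ge' by simp
  then have "g (y - 2) = y" using g_high[of "y-2"] k3 by simp
  moreover have "y - 2 \<noteq> m - 1" using \<open>l + k \<le> y\<close> k3 l_ge by simp
  ultimately show ?thesis using QI y by simp
qed

lemma pre_low: "y \<in> G \<Longrightarrow> y < m - 1 \<Longrightarrow> y \<in> Q"
  using g_low QI by simp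

lemma Q_img: "g ` Q = G - {m - 1}"
proof (intro set_eqI iffI)
  fix y assume "y \<in> g ` Q"
  then obtain x where x: "x \<in> Q" "y = g x" by auto
  then have "y \<in> G" using QD by simp
  moreover have "y \<noteq> m - 1"
  proof
    assume "y = m - 1"
    then show False using x unfolding FF_def by (auto split: if_splits)
  qed
  ultimately show "y \<in> G - {m - 1}" by simp
next
  fix y assume y: "y \<in> G - {m - 1}"
  have "y \<noteq> m" using y mG by auto
  have "y \<noteq> m - 1" using y by simp
  consider "y < m - 1" | "m < y" "y \<le> l" | "l < y" using y \<open>y \<noteq> m\<close> \<open>y \<noteq> m - 1\<close> by (simp, linarith)
  then show "y \<in> g ` Q"
  proof cases
    case 1 then show ?thesis using y pre_low g_low by (metis DiffD1 image_eqI)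
  next
    case 2 then show ?thesis using y pre_mid[of y] by (metis DiffD1 image_eqI)
  next
    case 3 then show ?thesis using y pre_high[of y] by (metis DiffD1 image_eqI)
  qed
qed

lemma Q_fin: "finite Q"
proof -
  have "Q \<subseteq> {..Max G}"
  proof
    fix x assume "x \<in> Q"
    then have "g x \<in> G" using QD by simp
    then have "g x \<le> Max G" using fin by simp
    then show "x \<in> {..Max G}" using FF_bounds(1)[where x=x and m="m-1" and l="l-1"] by simp
  qed
  then show ?thesis using finite_subset by blast
qed

lemma Q_card: "card Q = card G - 1"
proof -
  have "inj_on g Q" using g_inj by (meson inj_onI)
  then have "card (g ` Q) = card Q" by (rule card_image)
  moreover have "m - 1 \<in> G" using belowm m3 by simp
  ultimately show ?thesis using Q_img fin by simp
qed

lemma uniq: "isjump k G a \<Longrightarrow> a = l"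
proof (rule ccontr)
  assume a: "isjump k G a" "a \<noteq> l"
  then have "a < l" using ljprops by (meson le_neq_implies_less)
  have aG: "a \<in> G" "a + k \<in> G" using a unfolding isjump_def by auto
  have "a + k \<le> l"
  proof (rule ccontr)
    assume "\<not> a + k \<le> l"
    then have "a < l \<and> l < a + k" using \<open>a<l\<close> by simp
    then show False using a lG unfolding isjump_def by blast
  qed
  have "m \<le> a + 1" using jump_ge a by simp
  have "a + k < l + k" using \<open>a < l\<close> by simp
  have "m < a + k" using \<open>m \<le> a + 1\<close> k2 by simp
  then have "m + 1 < 2 * k" using TB[OF aG(2) lkG] \<open>a + k < l + k\<close> by simp
  define j where "j = l + k - m"
  have "a < j" "j < a + k" using \<open>a + k \<le> l\<close> \<open>m + 1 < 2*k\<close> \<open>m \<le> a + 1\<close> le2m unfolding j_def by auto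
  then have "j \<notin> G" using a unfolding isjump_def by blast
  have "1 \<le> j" using \<open>a < j\<close> by simp
  have "j + m \<notin> G" using gap_sum[OF gs \<open>1 \<le> j\<close> m1 \<open>j \<notin> G\<close> mG] .
  then show False using lkG m_ge_k l_ge k2 unfolding j_def by simp
qed

lemma belowQ: "1 \<le> x \<Longrightarrow> x < m - 1 \<Longrightarrow> x \<in> Q" using belowm pre_low by simp

lemma Q_gap: "gapset Q"
  unfolding gapset_def
proof (intro conjI ballI allI impI)
  show "finite Q" by (rule Q_fin)
  show "0 \<notin> Q"
  proof
    assume "0 \<in> Q"
    then show False using QD[of 0] g_low[of 0] G0 m3 by simp
  qed
  fix z a b assume z: "z \<in> Q" and ab: "1 \<le> a \<and> 1 \<le> b \<and> z = a + b"
  show "a \<in> Q \<or> b \<in> Q"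
  proof (rule ccontr)
    assume nab: "\<not> (a \<in> Q \<or> b \<in> Q)"
    have "\<not> a < m - 1" "\<not> b < m - 1" using belowQ ab nab by blast+
    then have am: "m - 1 \<le> a" "m - 1 \<le> b" by simp_all
    have zQ: "z \<noteq> m - 1" "g z \<in> G" using QD z by auto
    show False
    proof (cases "z \<le> l - 1")
      case True
      then show ?thesis using am ab le2m by linarith
    next
      case False
      then have gz: "g z = z + 2" using g_high by simp
      have w1: "l + k \<le> z + 2" "z + 2 \<le> l + m" using high_ge' Ubound zQ gz False by auto
      have nG: "x + 1 \<notin> G" if x: "x \<notin> Q" "m - 1 \<le> x" "x + 2 \<le> l + k" for x
      proof
        assume xG: "x + 1 \<in> G"
        have "x + 1 \<noteq> m" using xG mG by auto
        show False
        proof (cases "x + 1 \<le> l")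
          case True
          then have "g x = x + 1" using g_mid x by simp
          moreover have "x \<noteq> m - 1" using \<open>x + 1 \<noteq> m\<close> m3 by auto
          ultimately show False using x xG QI by metis
        next
          case False
          then show False using J[of "x + 1"] xG x by simp
        qed
      qed
      have al: "a + 2 \<le> l + k" "b + 2 \<le> l + k"
      proof -
        show "a + 2 \<le> l + k"
        proof (rule ccontr)
          assume "\<not> a + 2 \<le> l + k"
          then show False using ab w1 am m_ge_k k3 by linarith
        qed
        show "b + 2 \<le> l + k"
        proof (rule ccontr)
          assume "\<not> b + 2 \<le> l + k"
          then show False using ab w1 am m_ge_k k3 by linarith
        qed
      qed
      have "a + 1 \<notin> G" "b + 1 \<notin> G" using nG nab am al by auto
      then have "(a + 1) + (b + 1) \<notin> G" using gap_sum[OF gs, of "a+1" "b+1"] by simp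
      moreover have "(a + 1) + (b + 1) = z + 2" using ab by simp
      ultimately show False using zQ gz by simp
    qed
  qed
qed

lemma Q_mult: "mult Q = m - 1"
proof (rule mult_eqI)
  show "1 \<le> m - 1" using m3 by simp
  show "m - 1 \<notin> Q" using QD by blast
  fix x assume "1 \<le> x" "x < m - 1" then show "x \<in> Q" using belowQ by simp
qed

lemma Q_jump: "isjump (k - 1) Q (l - 1)"
  unfolding isjump_def
proof (intro conjI allI impI)
  show "l - 1 \<in> Q"
  proof (cases "m \<le> l")
    case True
    then have "m \<noteq> l" using lG mG by auto
    then have "m + 1 \<le> l" using True by simp
    then show ?thesis using pre_mid[of l] lG by simp
  next
    case False
    then have "l = m - 1" using l_ge by simp
    then show ?thesis using belowQ m3 by simp
  qed
  have e: "l - 1 + (k - 1) = (l + k) - 2" using l1 k3 by simp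
  have h: "(l + k) - 2 \<in> Q" using pre_high[of "l+k"] lkG k3 by simp
  show "l - 1 + (k - 1) \<in> Q" by (simp only: e h)
  fix z assume z: "l - 1 < z \<and> z < l - 1 + (k - 1)"
  show "z \<notin> Q"
  proof
    assume "z \<in> Q"
    then have "g z \<in> G" using QD by simp
    moreover have "g z = z + 2" using g_high z by simp
    moreover have "l < z + 2" "z + 2 < l + k" using z l1 k3 by auto
    ultimately show False using J[of "z+2"] by simp
  qed
qed

lemma Q_lj: "lj (k - 1) Q = l - 1"
proof (rule lj_eqI[OF Q_fin Q_jump])
  fix x assume xj: "isjump (k - 1) Q x"
  show "x \<le> l - 1"
  proof (rule ccontr)
    assume nx: "\<not> x \<le> l - 1"
    have xQ: "x \<in> Q" "x + (k - 1) \<in> Q" using xj unfolding isjump_def by auto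
    have e1: "g x = x + 2" "g (x + (k - 1)) = x + k + 1" using g_high nx k3 by auto
    have G1: "x + 2 \<in> G" "x + k + 1 \<in> G" using QD xQ e1 by metis+
    have "l + k \<le> x + 2" using high_ge' G1 nx by simp
    moreover have "x + k + 1 \<le> l + m" using Ubound[of "x+k+1"] G1 calculation k3 by simp
    moreover have "m < x + 2" using calculation l_ge k3 by simp
    moreover have "x + 2 < x + k + 1" using k3 by simp
    ultimately show False using TB[OF G1(1) G1(2)] by simp
  qed
qed

lemma Q_sp: "sp (k - 1) Q"
  unfolding sp_def
proof (intro ballI impI)
  fix a assume aQ: "a \<in> Q" and ex: "\<exists>y\<in>Q. a < y"
  have aQ': "a \<noteq> m - 1" "g a \<in> G" using QD aQ by auto
  show "\<exists>b\<in>Q. a < b \<and> b \<le> a + (k - 1)"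
  proof (cases "a + 1 < m - 1")
    case True
    then have "a + 1 \<in> Q" using belowQ by simp
    then show ?thesis by (intro bexI[of _ "a+1"]) (use k3 in auto)
  next
    case False
    define p where "p = (if a + 1 = m - 1 then m - 1 else g a)"
    have pG: "p \<in> G" using p_def aQ' belowm m3 by auto
    have pnm: "\<exists>c\<in>G. p < c"
    proof (cases "a + 1 = m - 1")
      case True
      then show ?thesis using p_def lkG l_ge k3 by (intro bexI[of _ "l+k"]) auto
    next
      case False
      then obtain c where "c \<in> Q" "a < c" using ex by blast
      then show ?thesis using p_def False QD g_mono by (intro bexI[of _ "g c"]) auto
    qed
    obtain s where s: "s \<in> G" "p < s" "\<And>z. z \<in> G \<Longrightarrow> p < z \<Longrightarrow> s \<le> z"
      using succ_ex[OF fin pG] pnm by blast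
    obtain v where "v \<in> G" "p < v" "v \<le> p + k" using spk pG pnm unfolding sp_def by blast
    then have spk': "s \<le> p + k" using s by force
    have sj: "p = l" if "s = p + k"
    proof -
      have "isjump k G p" unfolding isjump_def using pG s that by force
      then show ?thesis using uniq by simp
    qed
    have snm: "s \<noteq> m" using s mG by auto
    have pge: "m - 1 \<le> p" using p_def False aQ' FF_bounds(1)[where x=a and m="m-1" and l="l-1"] by (auto split: if_splits)
    consider (A) "a + 1 = m - 1" | (B) "m - 1 < a" "a \<le> l - 1" | (C) "l - 1 < a"
      using False aQ' by linarith
    then show ?thesis
    proof cases
      case A
      then have pe: "p = m - 1" using p_def by simp
      show ?thesis
      proof (cases "s \<le> l")
        case True
        have "m < s" using s pe snm by auto
        then have "s - 1 \<in> Q" using pre_mid s True by blast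
        moreover have "s \<noteq> p + k" using sj True pe k3 by auto
        ultimately show ?thesis using A pe spk' \<open>m < s\<close> by (intro bexI[of _ "s - 1"]) auto
      next
        case False
        then have "s - 2 \<in> Q" "l + k \<le> s" using pre_high s high_ge' by auto
        then show ?thesis using A pe spk' l_ge k3 by (intro bexI[of _ "s - 2"]) auto
      qed
    next
      case B
      then have pe: "p = a + 1" using p_def g_mid False by simp
      show ?thesis
      proof (cases "s \<le> l")
        case True
        have "m < s" using s pe B by auto
        then have "s - 1 \<in> Q" using pre_mid s True by blast
        moreover have "s \<noteq> p + k" using sj True pe k3 by auto
        ultimately show ?thesis using pe spk' s by (intro bexI[of _ "s - 1"]) auto
      next
        case False
        then have "s - 2 \<in> Q" "l + k \<le> s" using pre_high s high_ge' by auto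
        then show ?thesis using pe spk' B k3 by (intro bexI[of _ "s - 2"]) auto
      qed
    next
      case C
      then have pe: "p = a + 2" using p_def g_high False l_ge by auto
      have "s \<noteq> p + k" using sj pe C by auto
      moreover have "l < s" using s pe C by simp
      moreover have "s - 2 \<in> Q" using pre_high s calculation(2) by blast
      ultimately show ?thesis using pe spk' s by (intro bexI[of _ "s - 2"]) auto
    qed
  qed
qed

lemma Q_Phi: "Phi (k - 1) Q = G"
proof -
  have "Phi (k - 1) Q = insert (m - 1) (g ` Q)" unfolding Phi_def Q_mult Q_lj by simp
  also have "\<dots> = G" using Q_img belowm m3 by auto
  finally show ?thesis .
qed

end


lemma pair_count:
  assumes gs: "gapset G" and z: "z \<in> G" and a: "1 \<le> a" and ab: "a + b = z"
  shows "card {a..b} \<le> 2 * card (G \<inter> {a..b})"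
proof -
  let ?S = "G \<inter> {a..b}"
  have fS: "finite ?S" by simp
  have sub: "{a..b} \<subseteq> ?S \<union> (\<lambda>x. z - x) ` ?S"
  proof
    fix x assume x: "x \<in> {a..b}"
    show "x \<in> ?S \<union> (\<lambda>x. z - x) ` ?S"
    proof (cases "x \<in> G")
      case True then show ?thesis using x by simp
    next
      case False
      have "1 \<le> x" "x < z" using x a ab by auto
      then have "z - x \<in> G" using gap_diff[OF gs z _ _ False] by simp
      moreover have "z - x \<in> {a..b}" using x ab by auto
      moreover have "x = z - (z - x)" using \<open>x < z\<close> by simp
      ultimately show ?thesis by blast
    qed
  qed
  have "card {a..b} \<le> card (?S \<union> (\<lambda>x. z - x) ` ?S)" using sub by (intro card_mono) auto
  also have "\<dots> \<le> card ?S + card ((\<lambda>x. z - x) ` ?S)" by (rule card_Un_le)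
  also have "\<dots> \<le> card ?S + card ?S" using card_image_le[OF fS] by simp
  finally show ?thesis by simp
qed

lemma count_le:
  fixes G S :: "nat set"
  assumes fin: "finite G" and low: "\<And>x. 1 \<le> x \<Longrightarrow> x < m \<Longrightarrow> x \<in> G" and z: "z \<in> G"
    and SG: "S \<subseteq> G" and Sr: "S \<subseteq> {m..<z}" and m1: "1 \<le> m" and mz: "m \<le> z"
  shows "m + card S \<le> card G" "m + card S = card G \<Longrightarrow> G = {1..<m} \<union> S \<union> {z}"
proof -
  have fS: "finite S" using Sr finite_subset by blast
  have sub: "{1..<m} \<union> S \<union> {z} \<subseteq> G" using low SG z by auto
  have d1: "{1..<m} \<inter> S = {}" using Sr by auto
  have d2: "({1..<m} \<union> S) \<inter> {z} = {}" using Sr m1 mz by auto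
  have c: "card ({1..<m} \<union> S \<union> {z}) = m + card S"
    using d1 d2 fS m1 by (simp add: card_Un_disjoint)
  show "m + card S \<le> card G" using card_mono[OF fin sub] c by simp
  assume "m + card S = card G"
  then show "G = {1..<m} \<union> S \<union> {z}" using card_subset_eq[OF fin sub] c by simp
qed

definition cA :: "nat \<Rightarrow> nat \<Rightarrow> nat" where
  "cA n x = (if x = 2*n+1 then 3*n+1 else if x \<le> 3*n then x else if x < 4*n then x + 1
             else if x = 4*n+1 then 4*n+1 else x + 1)"

definition dB :: "nat \<Rightarrow> nat \<Rightarrow> nat" where
  "dB n y = (if y = 3*n+1 then 2*n+1 else if y \<le> 3*n then y else if y \<le> 4*n then y - 1
             else if y = 4*n+1 then 4*n+1 else y - 1)"

definition chi :: "nat \<Rightarrow> nat set \<Rightarrow> nat set" where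
  "chi n G = insert (2*n) (cA n ` G)"

definition chi' :: "nat \<Rightarrow> nat set \<Rightarrow> nat set" where
  "chi' n G = dB n ` (G - {2*n})"

lemma dB_cA: "1 \<le> n \<Longrightarrow> x \<noteq> 4*n \<Longrightarrow> dB n (cA n x) = x"
  unfolding cA_def dB_def by (auto split: if_splits)

lemma cA_dB: "1 \<le> n \<Longrightarrow> y \<noteq> 2*n+1 \<Longrightarrow> y \<noteq> 4*n+2 \<Longrightarrow> cA n (dB n y) = y"
  unfolding cA_def dB_def by (auto split: if_splits)



locale exA = sgap +
  fixes n :: nat
  assumes n1: "1 \<le> n" and kn: "k = 2 * n" and cardG: "card G = 3 * n + 1" and nl: "\<not> l < 2 * m"
begin

lemma two_m: "2 * m \<notin> G" using gap_sum[OF gs m1 m1 mG mG] by (simp add: mult_2)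

lemma struct: "m = 2 * n" "l = 4 * n + 1" "G = {1..<m} \<union> (G \<inter> {m..l + k - m}) \<union> {l + k}"
proof -
  have l2: "2 * m + 1 \<le> l" using nl lG two_m by (metis le_neq_implies_less not_less Suc_leI Suc_eq_plus1)
  define z where "z = l + k"
  have zG: "z \<in> G" using lkG z_def by simp
  let ?S = "G \<inter> {m..z - m}"
  have "m + (z - m) = z" using l2 z_def by simp
  from pair_count[OF gs zG m1 this] have pc: "card {m..z - m} \<le> 2 * card ?S" .
  have cI: "card {m..z - m} = z - 2 * m + 1" using l2 z_def by simp
  have Sr: "?S \<subseteq> {m..<z}" using l2 z_def m1 by auto
  have mz: "m \<le> z" using l2 z_def by simp
  have SG: "?S \<subseteq> G" by blast
  note cl = count_le[where G=G and S="?S" and m=m and z=z, OF fin belowm zG SG Sr m1 mz]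
  have mk: "2 * n \<le> m" using m_ge_k kn by simp
  have A: "m = 2 * n \<and> l = 4 * n + 1 \<and> m + card ?S = card G"
    using pc cI cl(1) cardG mk l2 z_def kn by linarith
  then have e: "G = {1..<m} \<union> ?S \<union> {z}" using cl(2) by blast
  show "m = 2 * n" "l = 4 * n + 1" using A by auto
  show "G = {1..<m} \<union> (G \<inter> {m..l + k - m}) \<union> {l + k}" using e unfolding z_def .
qed

lemma mem: "x \<in> G \<Longrightarrow> 1 \<le> x \<and> (x \<le> 4 * n + 1 \<or> x = 6 * n + 1)"
proof -
  assume x: "x \<in> G"
  then have "x \<in> {1..<m} \<union> (G \<inter> {m..l + k - m}) \<union> {l + k}" using struct(3) by blast
  then show ?thesis using struct(1,2) kn G0 x by (cases x) auto
qed

lemma low: "1 \<le> x \<Longrightarrow> x < 2 * n \<Longrightarrow> x \<in> G" using belowm struct(1) by simp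
lemma n2: "2 * n \<notin> G" using mG struct(1) by simp
lemma n4: "4 * n \<notin> G" using two_m struct(1) by simp
lemma n41: "4 * n + 1 \<in> G" using lG struct(2) by simp
lemma n61: "6 * n + 1 \<in> G" using lkG struct(2) kn by simp
lemma n21: "2 * n + 1 \<in> G"
proof -
  have "6 * n + 1 - 4 * n \<in> G" using gap_diff[OF gs n61 _ _ n4] n1 by simp
  moreover have "6 * n + 1 - 4 * n = 2 * n + 1" by simp
  ultimately show ?thesis by simp
qed
lemma pair: "1 \<le> x \<Longrightarrow> x < 6 * n + 1 \<Longrightarrow> x \<in> G \<or> 6 * n + 1 - x \<in> G"
  using gap_diff[OF gs n61] by blast

abbreviation "H \<equiv> chi n G"

lemma H_iff: "y \<in> H \<longleftrightarrow> y = 2 * n \<or> (\<exists>x\<in>G. cA n x = y)" unfolding chi_def by auto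

lemma cA_id: "x \<le> 3 * n \<Longrightarrow> x \<noteq> 2 * n + 1 \<Longrightarrow> cA n x = x" unfolding cA_def by simp
lemma cA_sh: "3 * n + 1 \<le> x \<Longrightarrow> x < 4 * n \<Longrightarrow> cA n x = x + 1" unfolding cA_def using n1 by simp

lemma h1: "1 \<le> y \<Longrightarrow> y \<le> 2 * n \<Longrightarrow> y \<in> H"
proof -
  assume y: "1 \<le> y" "y \<le> 2 * n"
  show "y \<in> H"
  proof (cases "y = 2 * n")
    case True then show ?thesis using H_iff by simp
  next
    case False
    then have "y \<in> G" "cA n y = y" using low y cA_id by auto
    then show ?thesis using H_iff by blast
  qed
qed

lemma h2: "3 * n + 1 \<in> H" "4 * n + 1 \<in> H" "6 * n + 2 \<in> H"
proof -
  have "cA n (2*n+1) = 3*n+1" "cA n (4*n+1) = 4*n+1" "cA n (6*n+1) = 6*n+2"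
    unfolding cA_def using n1 by auto
  then show "3 * n + 1 \<in> H" "4 * n + 1 \<in> H" "6 * n + 2 \<in> H"
    using H_iff n21 n41 n61 by blast+
qed

lemma h3: "y \<in> H \<Longrightarrow> 1 \<le> y \<and> (y \<le> 4 * n + 1 \<or> y = 6 * n + 2)"
proof -
  assume "y \<in> H"
  then consider "y = 2 * n" | x where "x \<in> G" "cA n x = y" using H_iff by blast
  then show ?thesis
  proof cases
    case 1 then show ?thesis using n1 by simp
  next
    case 2
    then show ?thesis using mem[OF 2(1)] n1 unfolding cA_def by (auto split: if_splits)
  qed
qed

lemma h4: "2 * n + 1 \<notin> H"
proof
  assume "2 * n + 1 \<in> H"
  then obtain x where "x \<in> G" "cA n x = 2 * n + 1" using H_iff by auto
  then show False using n1 unfolding cA_def by (auto split: if_splits)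
qed

lemma h5: "2 * n + 2 \<le> y \<Longrightarrow> y \<le> 3 * n \<Longrightarrow> y \<in> H \<Longrightarrow> y \<in> G"
proof -
  assume y: "2 * n + 2 \<le> y" "y \<le> 3 * n" "y \<in> H"
  then obtain x where x: "x \<in> G" "cA n x = y" using H_iff by auto
  then have "x = y" using y n1 unfolding cA_def by (auto split: if_splits)
  then show "y \<in> G" using x by simp
qed

lemma h5': "2 * n + 2 \<le> y \<Longrightarrow> y \<le> 3 * n \<Longrightarrow> y \<in> G \<Longrightarrow> y \<in> H"
  using H_iff cA_id[of y] by force

lemma h6: "3 * n + 2 \<le> y \<Longrightarrow> y \<le> 4 * n \<Longrightarrow> y - 1 \<in> G \<Longrightarrow> y \<in> H"
proof -
  assume y: "3 * n + 2 \<le> y" "y \<le> 4 * n" "y - 1 \<in> G"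
  then have "cA n (y - 1) = y" using cA_sh[of "y - 1"] by simp
  then show "y \<in> H" using H_iff y by blast
qed

lemma H_gap: "gapset H"
  unfolding gapset_def
proof (intro conjI ballI allI impI)
  show "finite H" unfolding chi_def using fin by simp
  show "0 \<notin> H" using h3 by fastforce
  fix z a b assume z: "z \<in> H" and ab: "1 \<le> a \<and> 1 \<le> b \<and> z = a + b"
  show "a \<in> H \<or> b \<in> H"
  proof (rule ccontr)
    assume nab: "\<not> (a \<in> H \<or> b \<in> H)"
    have "\<not> a \<le> 2 * n" "\<not> b \<le> 2 * n" using h1 ab nab by blast+
    then have z6: "z = 6 * n + 2" using h3[OF z] ab by linarith
    consider "a = 2*n+1" | "2*n+2 \<le> a \<and> a \<le> 3*n" | "a = 3*n+1" | "3*n+2 \<le> a \<and> a \<le> 4*n"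
      | "a = 4*n+1" | "4*n+2 \<le> a" using \<open>\<not> a \<le> 2 * n\<close> by linarith
    then show False
    proof cases
      case 1 then have "b = 4*n+1" using ab z6 by simp
      then show False using h2 nab by simp
    next
      case 2
      then have "a \<notin> G" using nab h5' by blast
      then have "6 * n + 1 - a \<in> G" using pair[of a] 2 ab n1 by simp
      moreover have "b - 1 = 6 * n + 1 - a" "3*n+2 \<le> b" "b \<le> 4 * n" using 2 ab z6 by auto
      ultimately show False using h6 nab by metis
    next
      case 3 then show False using h2 nab by simp
    next
      case 4
      then have b: "2*n+2 \<le> b" "b \<le> 3*n" using ab z6 by auto
      then have "b \<notin> G" using nab h5' by blast
      then have "6 * n + 1 - b \<in> G" using pair[of b] b n1 by simp
      moreover have "a - 1 = 6 * n + 1 - b" using ab z6 4 by auto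
      ultimately show False using h6 nab 4 by metis
    next
      case 5 then show False using h2 nab by simp
    next
      case 6 then have "b \<le> 2 * n" using ab z6 by simp
      then show False using \<open>\<not> b \<le> 2 * n\<close> by simp
    qed
  qed
qed

lemma H_card: "card H = 3 * n + 2"
proof -
  have "inj_on (cA n) G"
  proof (rule inj_onI)
    fix x y assume "x \<in> G" "y \<in> G" "cA n x = cA n y"
    then show "x = y" using dB_cA[OF n1] n4 by metis
  qed
  moreover have "2 * n \<notin> cA n ` G"
  proof
    assume "2 * n \<in> cA n ` G"
    then obtain x where "x \<in> G" "cA n x = 2 * n" by auto
    then show False using n2 n1 unfolding cA_def by (auto split: if_splits)
  qed
  ultimately show ?thesis unfolding chi_def using fin cardG by (simp add: card_image)
qed

lemma H_mult: "mult H = 2 * n + 1"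
  by (rule mult_eqI) (use h1 h4 in auto)

lemma H_jump: "isjump (2 * n + 1) H (4 * n + 1)"
  unfolding isjump_def
proof (intro conjI allI impI)
  show "4 * n + 1 \<in> H" "4 * n + 1 + (2 * n + 1) \<in> H" using h2 by auto
  fix z assume z: "4 * n + 1 < z \<and> z < 4 * n + 1 + (2 * n + 1)"
  show "z \<notin> H"
  proof
    assume "z \<in> H" from h3[OF this] show False using z by linarith
  qed
qed

lemma H_lj: "lj (2 * n + 1) H = 4 * n + 1"
proof (rule lj_eqI)
  show "finite H" unfolding chi_def using fin by simp
  show "isjump (2 * n + 1) H (4 * n + 1)" by (rule H_jump)
  fix x assume "isjump (2 * n + 1) H x"
  then have "x \<in> H" "x + (2 * n + 1) \<in> H" unfolding isjump_def by auto
  then show "x \<le> 4 * n + 1" using h3 by fastforce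
qed

lemma H_sp: "sp (2 * n + 1) H"
  unfolding sp_def
proof (intro ballI impI)
  fix y assume yH: "y \<in> H" and ex: "\<exists>v\<in>H. y < v"
  have y: "1 \<le> y" "y \<le> 4 * n + 1 \<or> y = 6 * n + 2" using h3 yH by auto
  consider "y < 2 * n" | "y = 2 * n" | "2 * n + 1 \<le> y \<and> y \<le> 4 * n" | "y = 4 * n + 1" | "y = 6 * n + 2"
    using y by linarith
  then show "\<exists>v\<in>H. y < v \<and> v \<le> y + (2 * n + 1)"
  proof cases
    case 1 then show ?thesis using h1[of "y+1"] by (intro bexI[of _ "y+1"]) auto
  next
    case 2 then show ?thesis using h2 by (intro bexI[of _ "3*n+1"]) auto
  next
    case 3 then show ?thesis using h2 by (intro bexI[of _ "4*n+1"]) auto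
  next
    case 4 then show ?thesis using h2 by (intro bexI[of _ "6*n+2"]) auto
  next
    case 5 then show ?thesis using ex h3 by fastforce
  qed
qed

lemma H_back: "chi' n H = G"
proof -
  have "2 * n \<notin> cA n ` G"
  proof
    assume "2 * n \<in> cA n ` G"
    then obtain x where "x \<in> G" "cA n x = 2 * n" by auto
    then show False using n2 n1 unfolding cA_def by (auto split: if_splits)
  qed
  then have "H - {2 * n} = cA n ` G" unfolding chi_def by auto
  then have "chi' n H = dB n ` cA n ` G" unfolding chi'_def by simp
  also have "\<dots> = G"
  proof -
    have "\<And>x. x \<in> G \<Longrightarrow> dB n (cA n x) = x" using dB_cA[OF n1] n4 by metis
    then show ?thesis by (simp add: image_image cong: image_cong)
  qed
  finally show ?thesis .
qed

end


locale exB = sgap +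
  fixes n :: nat
  assumes n1: "1 \<le> n" and kn: "k = 2 * n + 1" and cardG: "card G = 3 * n + 2" and nl: "\<not> l + 2 \<le> 2 * m"
begin

lemma two_m: "2 * m \<notin> G" using gap_sum[OF gs m1 m1 mG mG] by (simp add: mult_2)

lemma struct: "m = 2 * n + 1" "l = 4 * n + 1" "G = {1..<m} \<union> (G \<inter> {m..l + k - m}) \<union> {l + k}"
proof -
  have "l \<noteq> 2 * m" using lG two_m by auto
  then have lc: "l + 1 = 2 * m \<or> 2 * m + 1 \<le> l" using nl by linarith
  define z where "z = l + k"
  have zG: "z \<in> G" using lkG z_def by simp
  let ?S = "G \<inter> {m..z - m}"
  have l2: "2 * m \<le> l + 1" using lc by auto
  have "m + (z - m) = z" using l2 z_def kn by simp
  from pair_count[OF gs zG m1 this] have pc: "card {m..z - m} \<le> 2 * card ?S" .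
  have cI: "card {m..z - m} = z - 2 * m + 1" using l2 z_def kn by simp
  have Sr: "?S \<subseteq> {m..<z}" using l2 z_def m1 kn by auto
  have mz: "m \<le> z" using l2 z_def by simp
  have SG: "?S \<subseteq> G" by blast
  have cl1: "m + card ?S \<le> card G"
    by (rule count_le(1)[where G=G and S="?S" and m=m and z=z]) (use fin belowm zG SG Sr m1 mz in auto)
  have cl2: "m + card ?S = card G \<Longrightarrow> G = {1..<m} \<union> ?S \<union> {z}"
    by (rule count_le(2)[where G=G and S="?S" and m=m and z=z]) (use fin belowm zG SG Sr m1 mz in auto)
  have mk: "2 * n + 1 \<le> m" using m_ge_k kn by simp
  have A: "m = 2 * n + 1 \<and> l = 4 * n + 1 \<and> m + card ?S = card G"
    using lc
  proof
    assume h: "l + 1 = 2 * m"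
    define c where "c = card ?S"
    have "z - 2 * m + 1 = 2 * n + 1" using h z_def kn by simp
    then have "2 * n + 1 \<le> 2 * c" using pc cI c_def by simp
    then have "n + 1 \<le> c" by simp
    then show ?thesis using cl1 cardG mk h c_def by linarith
  next
    assume "2 * m + 1 \<le> l"
    then show ?thesis using pc cI cl1 cardG mk z_def kn by linarith
  qed
  then have e: "G = {1..<m} \<union> ?S \<union> {z}" using cl2 by blast
  show "m = 2 * n + 1" "l = 4 * n + 1" using A by auto
  show "G = {1..<m} \<union> (G \<inter> {m..l + k - m}) \<union> {l + k}" using e unfolding z_def .
qed

lemma mem: "x \<in> G \<Longrightarrow> 1 \<le> x \<and> (x \<le> 4 * n + 1 \<or> x = 6 * n + 2)"
proof -
  assume x: "x \<in> G"
  then have "x \<in> {1..<m} \<union> (G \<inter> {m..l + k - m}) \<union> {l + k}" using struct(3) by blast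
  then show ?thesis using struct(1,2) kn G0 x by (cases x) auto
qed

lemma low: "1 \<le> x \<Longrightarrow> x \<le> 2 * n \<Longrightarrow> x \<in> G" using belowm struct(1) by simp
lemma n21: "2 * n + 1 \<notin> G" using mG struct(1) by simp
lemma n41: "4 * n + 1 \<in> G" using lG struct(2) by simp
lemma n62: "6 * n + 2 \<in> G" using lkG struct(2) kn by simp
lemma n42: "4 * n + 2 \<notin> G" using mem n1 by fastforce
lemma n2: "2 * n \<in> G" using low n1 by simp
lemma pair: "1 \<le> x \<Longrightarrow> x < 6 * n + 2 \<Longrightarrow> x \<in> G \<or> 6 * n + 2 - x \<in> G"
  using gap_diff[OF gs n62] by blast
lemma n31: "3 * n + 1 \<in> G" using pair[of "3*n+1"] by auto

abbreviation "K \<equiv> chi' n G"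

lemma K_iff: "x \<in> K \<longleftrightarrow> (\<exists>y\<in>G. y \<noteq> 2 * n \<and> dB n y = x)" unfolding chi'_def by auto

lemma k1: "1 \<le> x \<Longrightarrow> x < 2 * n \<Longrightarrow> x \<in> K"
proof -
  assume x: "1 \<le> x" "x < 2 * n"
  then have "dB n x = x" unfolding dB_def by simp
  then show "x \<in> K" using K_iff low x by force
qed

lemma k1': "2 * n + 1 \<in> K" "4 * n + 1 \<in> K" "6 * n + 1 \<in> K"
proof -
  have "dB n (3*n+1) = 2*n+1" "dB n (4*n+1) = 4*n+1" "dB n (6*n+2) = 6*n+1"
    unfolding dB_def using n1 by auto
  moreover have "3*n+1 \<noteq> 2*n" "4*n+1 \<noteq> 2*n" "6*n+2 \<noteq> 2*n" by auto
  ultimately show "2 * n + 1 \<in> K" "4 * n + 1 \<in> K" "6 * n + 1 \<in> K"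
    using K_iff n31 n41 n62 by blast+
qed

lemma k2: "x \<in> K \<Longrightarrow> 1 \<le> x \<and> (x \<le> 4 * n + 1 \<or> x = 6 * n + 1)"
proof -
  assume "x \<in> K"
  then obtain y where y: "y \<in> G" "y \<noteq> 2 * n" "dB n y = x" using K_iff by blast
  show ?thesis using mem[OF y(1)] y n1 unfolding dB_def by (auto split: if_splits)
qed

lemma k3: "2 * n \<notin> K"
proof
  assume "2 * n \<in> K"
  then obtain y where y: "y \<in> G" "y \<noteq> 2 * n" "dB n y = 2 * n" using K_iff by blast
  then show False using n1 unfolding dB_def by (auto split: if_splits)
qed

lemma k4: "4 * n \<notin> K"
proof
  assume "4 * n \<in> K"
  then obtain y where y: "y \<in> G" "y \<noteq> 2 * n" "dB n y = 4 * n" using K_iff by blast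
  then show False using n1 unfolding dB_def by (auto split: if_splits)
qed

lemma k5: "2 * n + 2 \<le> x \<Longrightarrow> x \<le> 3 * n \<Longrightarrow> x \<in> G \<Longrightarrow> x \<in> K"
proof -
  assume x: "2 * n + 2 \<le> x" "x \<le> 3 * n" "x \<in> G"
  then have "dB n x = x" unfolding dB_def by simp
  then show "x \<in> K" using K_iff x by force
qed

lemma k6: "3 * n + 1 \<le> x \<Longrightarrow> x \<le> 4 * n - 1 \<Longrightarrow> x + 1 \<in> G \<Longrightarrow> x \<in> K"
proof -
  assume x: "3 * n + 1 \<le> x" "x \<le> 4 * n - 1" "x + 1 \<in> G"
  then have "dB n (x + 1) = x" unfolding dB_def by simp
  moreover have "x + 1 \<noteq> 2 * n" using x by simp
  ultimately show "x \<in> K" using K_iff x by blast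
qed

lemma K_fin: "finite K" unfolding chi'_def using fin by simp

lemma K_gap: "gapset K"
  unfolding gapset_def
proof (intro conjI ballI allI impI)
  show "finite K" by (rule K_fin)
  show "0 \<notin> K" using k2 by fastforce
  fix z a b assume z: "z \<in> K" and ab: "1 \<le> a \<and> 1 \<le> b \<and> z = a + b"
  show "a \<in> K \<or> b \<in> K"
  proof (rule ccontr)
    assume nab: "\<not> (a \<in> K \<or> b \<in> K)"
    have "\<not> a < 2 * n" "\<not> b < 2 * n" using k1 ab nab by blast+
    then have "4 * n \<le> z" using ab by simp
    then have zc: "z = 4 * n \<or> z = 4 * n + 1 \<or> z = 6 * n + 1" using k2[OF z] by linarith
    have "z \<noteq> 4 * n" using z k4 by auto
    show False
    proof (cases "z = 4 * n + 1")
      case True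
      then have "a = 2 * n + 1 \<or> b = 2 * n + 1" using ab \<open>\<not> a < 2 * n\<close> \<open>\<not> b < 2 * n\<close> by linarith
      then show False using k1' nab by auto
    next
      case False
      then have z6: "z = 6 * n + 1" using zc \<open>z \<noteq> 4 * n\<close> by simp
      consider "a = 2*n" | "a = 2*n+1" | "2*n+2 \<le> a \<and> a \<le> 3*n" | "3*n+1 \<le> a \<and> a \<le> 4*n-1"
        | "a = 4*n" | "a = 4*n+1" | "4*n+2 \<le> a" using \<open>\<not> a < 2 * n\<close> n1 by linarith
      then show False
      proof cases
        case 1 then have "b = 4*n+1" using ab z6 by simp
        then show False using k1' nab by simp
      next
        case 2 then show False using k1' nab by simp
      next
        case 3
        then have "a \<notin> G" using nab k5 by blast
        then have "6 * n + 2 - a \<in> G" using pair[of a] 3 ab n1 by simp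
        moreover have "b + 1 = 6 * n + 2 - a" "3*n+1 \<le> b" "b \<le> 4 * n - 1" using 3 ab z6 by auto
        ultimately show False using k6 nab by metis
      next
        case 4
        then have b: "2*n+2 \<le> b" "b \<le> 3*n" using ab z6 n1 by auto
        then have "b \<notin> G" using nab k5 by blast
        then have "6 * n + 2 - b \<in> G" using pair[of b] b n1 by simp
        moreover have "a + 1 = 6 * n + 2 - b" using ab z6 4 by auto
        ultimately show False using k6 nab 4 by metis
      next
        case 5 then have "b = 2*n+1" using ab z6 by simp
        then show False using k1' nab by simp
      next
        case 6 then show False using k1' nab by simp
      next
        case 7 then have "b < 2 * n" using ab z6 by simp
        then show False using \<open>\<not> b < 2 * n\<close> by simp
      qed
    qed
  qed
qed

lemma K_card: "card K = 3 * n + 1"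
proof -
  have "inj_on (dB n) (G - {2 * n})"
  proof (rule inj_onI)
    fix x y assume xy: "x \<in> G - {2*n}" "y \<in> G - {2*n}" "dB n x = dB n y"
    have "x \<noteq> 2*n+1" "x \<noteq> 4*n+2" "y \<noteq> 2*n+1" "y \<noteq> 4*n+2" using xy n21 n42 by auto
    then show "x = y" using cA_dB[OF n1] xy(3) by metis
  qed
  then have "card K = card (G - {2 * n})" unfolding chi'_def by (simp add: card_image)
  also have "\<dots> = 3 * n + 1" using cardG n2 fin by simp
  finally show ?thesis .
qed

lemma K_mult: "mult K = 2 * n"
  by (rule mult_eqI) (use k1 k3 n1 in auto)

lemma K_jump: "isjump (2 * n) K (4 * n + 1)"
  unfolding isjump_def
proof (intro conjI allI impI)
  show "4 * n + 1 \<in> K" "4 * n + 1 + 2 * n \<in> K" using k1' by auto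
  fix z assume z: "4 * n + 1 < z \<and> z < 4 * n + 1 + 2 * n"
  show "z \<notin> K"
  proof
    assume "z \<in> K" from k2[OF this] show False using z by linarith
  qed
qed

lemma K_lj: "lj (2 * n) K = 4 * n + 1"
proof (rule lj_eqI[OF K_fin K_jump])
  fix x assume "isjump (2 * n) K x"
  then have "x \<in> K" "x + 2 * n \<in> K" unfolding isjump_def by auto
  then show "x \<le> 4 * n + 1" using k2 n1 by fastforce
qed

lemma K_sp: "sp (2 * n) K"
  unfolding sp_def
proof (intro ballI impI)
  fix y assume yK: "y \<in> K" and ex: "\<exists>v\<in>K. y < v"
  have y: "1 \<le> y" "y \<le> 4 * n + 1 \<or> y = 6 * n + 1" using k2 yK by auto
  have "y \<noteq> 2 * n" using yK k3 by auto
  then consider "y + 1 < 2 * n" | "y + 1 = 2 * n" | "2 * n + 1 \<le> y \<and> y \<le> 4 * n" | "y = 4 * n + 1" | "y = 6 * n + 1"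
    using y by linarith
  then show "\<exists>v\<in>K. y < v \<and> v \<le> y + 2 * n"
  proof cases
    case 1 then show ?thesis using k1[of "y+1"] by (intro bexI[of _ "y+1"]) auto
  next
    case 2 then show ?thesis using k1' n1 y by (intro bexI[of _ "2*n+1"]) auto
  next
    case 3 then show ?thesis using k1' by (intro bexI[of _ "4*n+1"]) auto
  next
    case 4 then show ?thesis using k1' n1 by (intro bexI[of _ "6*n+1"]) auto
  next
    case 5 then show ?thesis using ex k2 by fastforce
  qed
qed

lemma K_back: "chi n K = G"
proof -
  have "\<And>y. y \<in> G - {2 * n} \<Longrightarrow> cA n (dB n y) = y"
  proof -
    fix y assume "y \<in> G - {2 * n}"
    then have "y \<noteq> 2*n+1" "y \<noteq> 4*n+2" using n21 n42 by auto
    then show "cA n (dB n y) = y" using cA_dB[OF n1] by blast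
  qed
  then have "cA n ` K = G - {2 * n}" unfolding chi'_def image_image
  proof (intro set_eqI iffI)
    fix x assume "x \<in> (\<lambda>y. cA n (dB n y)) ` (G - {2 * n})"
    then obtain y where "y \<in> G - {2 * n}" "x = cA n (dB n y)" by blast
    then show "x \<in> G - {2 * n}" using \<open>\<And>y. y \<in> G - {2 * n} \<Longrightarrow> cA n (dB n y) = y\<close> by simp
  next
    fix x assume x: "x \<in> G - {2 * n}"
    then have "x = cA n (dB n x)" using \<open>\<And>y. y \<in> G - {2 * n} \<Longrightarrow> cA n (dB n y) = y\<close> by simp
    then show "x \<in> (\<lambda>y. cA n (dB n y)) ` (G - {2 * n})" using x by blast
  qed
  then show ?thesis unfolding chi_def using n2 by auto
qed

end


definition ThA :: "nat \<Rightarrow> nat set \<Rightarrow> nat set" where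
  "ThA n G = (if lj (2*n) G < 2 * mult G then Phi (2*n) G else chi n G)"

definition ThB :: "nat \<Rightarrow> nat set \<Rightarrow> nat set" where
  "ThB n G = (if lj (2*n+1) G \<le> 2 * mult G - 2 then Psi (2*n+1) G else chi' n G)"

lemma LA:
  assumes n1: "1 \<le> n" and GA: "G \<in> pure_sparse_gapsets (2 * n) (3 * n + 1)"
  shows "ThA n G \<in> pure_sparse_gapsets (2 * n + 1) (3 * n + 2) \<and> ThB n (ThA n G) = G"
proof -
  have gs: "gapset G" and cG: "card G = 3 * n + 1" and ps: "pure_sparse (2*n) G"
    using GA unfolding pure_sparse_gapsets_def by auto
  have fin: "finite G" using gs unfolding gapset_def by blast
  have sj: "sp (2*n) G" "\<exists>x. isjump (2*n) G x" using pure_sparse_iff[OF fin] ps n1 by auto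
  interpret sgap G "2*n" using gs sj n1 by unfold_locales auto
  show ?thesis
  proof (cases "lj (2*n) G < 2 * mult G")
    case True
    interpret sgapA G "2*n"
    proof unfold_locales
      show "l < 2 * m" using True unfolding l_def m_def .
      fix x y assume "x \<in> G" "y \<in> G" "m < x" "x < y"
      then have "m + 1 \<le> card G" by (rule twoel_card)
      then show "m \<le> 2 * (2 * n)" using cG by simp
    qed
    have e: "ThA n G = P" unfolding ThA_def using True by simp
    have "P \<in> pure_sparse_gapsets (2 * n + 1) (3 * n + 2)"
      unfolding pure_sparse_gapsets_def
      using P_gap P_card cG pure_sparse_iff[OF P_fin] P_sp P_jump by auto
    moreover have "ThB n P = G"
    proof -
      have "lj (2*n+1) P \<le> 2 * mult P - 2" using P_lj P_mult lt2m by simp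
      then show ?thesis unfolding ThB_def using P_Psi by simp
    qed
    ultimately show ?thesis using e by simp
  next
    case False
    interpret exA G "2*n" n
    proof unfold_locales
      show "\<not> l < 2 * m" using False unfolding l_def m_def .
    qed (use n1 cG in auto)
    have e: "ThA n G = H" unfolding ThA_def using False by simp
    have fH: "finite H" unfolding chi_def using fin by simp
    have "H \<in> pure_sparse_gapsets (2 * n + 1) (3 * n + 2)"
      unfolding pure_sparse_gapsets_def
      using H_gap H_card pure_sparse_iff[OF fH] H_sp H_jump by auto
    moreover have "ThB n H = G"
    proof -
      have "\<not> lj (2*n+1) H \<le> 2 * mult H - 2" using H_lj H_mult by simp
      then show ?thesis unfolding ThB_def using H_back by simp
    qed
    ultimately show ?thesis using e by simp
  qed
qed

lemma LB:
  assumes n1: "1 \<le> n" and GB: "G \<in> pure_sparse_gapsets (2 * n + 1) (3 * n + 2)"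
  shows "ThB n G \<in> pure_sparse_gapsets (2 * n) (3 * n + 1) \<and> ThA n (ThB n G) = G"
proof -
  have gs: "gapset G" and cG: "card G = 3 * n + 2" and ps: "pure_sparse (2*n+1) G"
    using GB unfolding pure_sparse_gapsets_def by auto
  have fin: "finite G" using gs unfolding gapset_def by blast
  have sj: "sp (2*n+1) G" "\<exists>x. isjump (2*n+1) G x" using pure_sparse_iff[OF fin] ps by auto
  interpret sgap G "2*n+1" using gs sj n1 by unfold_locales auto
  show ?thesis
  proof (cases "lj (2*n+1) G \<le> 2 * mult G - 2")
    case True
    interpret sgapB G "2*n+1"
    proof unfold_locales
      show "3 \<le> 2 * n + 1" using n1 by simp
      show "l + 2 \<le> 2 * m" using True m1 unfolding l_def m_def by simp
      fix x y assume "x \<in> G" "y \<in> G" "m < x" "x < y"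
      then have "m + 1 \<le> card G" by (rule twoel_card)
      then show "m + 1 < 2 * (2 * n + 1)" using cG n1 by simp
    qed
    have e: "ThB n G = Q" unfolding ThB_def using True by simp
    have k1: "2 * n + 1 - 1 = 2 * n" by simp
    have "Q \<in> pure_sparse_gapsets (2 * n) (3 * n + 1)"
      unfolding pure_sparse_gapsets_def
      using Q_gap Q_card cG pure_sparse_iff[OF Q_fin] Q_sp Q_jump n1 unfolding k1 by auto
    moreover have "ThA n Q = G"
    proof -
      have "lj (2*n) Q < 2 * mult Q" using Q_lj Q_mult le2m l1 unfolding k1 by simp
      then show ?thesis unfolding ThA_def using Q_Phi unfolding k1 by simp
    qed
    ultimately show ?thesis using e by simp
  next
    case False
    interpret exB G "2*n+1" n
    proof unfold_locales
      show "\<not> l + 2 \<le> 2 * m" using False m1 unfolding l_def m_def by simp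
    qed (use n1 cG in auto)
    have e: "ThB n G = K" unfolding ThB_def using False by simp
    have "K \<in> pure_sparse_gapsets (2 * n) (3 * n + 1)"
      unfolding pure_sparse_gapsets_def
      using K_gap K_card pure_sparse_iff[OF K_fin] K_sp K_jump n1 by auto
    moreover have "ThA n K = G"
    proof -
      have "\<not> lj (2*n) K < 2 * mult K" using K_lj K_mult by simp
      then show ?thesis unfolding ThA_def using K_back by simp
    qed
    ultimately show ?thesis using e by simp
  qed
qed

theorem mainTheorem1:
  fixes n :: nat
  assumes "n \<ge> 1"
  shows "card (pure_sparse_gapsets (2 * n) (3 * n + 1)) = card (pure_sparse_gapsets (2 * n + 1) (3 * n + 2))"
proof -
  have "bij_betw (ThA n) (pure_sparse_gapsets (2 * n) (3 * n + 1)) (pure_sparse_gapsets (2 * n + 1) (3 * n + 2))"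
    by (rule bij_betw_byWitness[where f'="ThB n"]) (use LA[OF assms] LB[OF assms] in auto)
  then show ?thesis by (rule bij_betw_same_card)
qed


end
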